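(* Let $R$ be a finite Frobenius ring and $\mathcal P_{\rm hom}$ the partition of $R$ induced by the normalized homogeneous weight $\omega$. Then for every block $P$ of $\mathcal P_{\rm hom}$ and every $a\in R$, the sum $\sum_{b\in P}\chi(ab)$ is the same for all generating characters $\chi$ of $R$ (and is a real number). Consequently the right $\chi$-dual partition of $\mathcal P_{\rm hom}$ does not depend on the choice of the generating character $\chi$. *)

theory Defs
  imports Complex_Main
begin

definition additive_character :: "('a::ring_1 \<Rightarrow> complex) \<Rightarrow> bool" where
  "additive_character \<chi> \<longleftrightarrow>
     (\<forall>x y. \<chi> (x + y) = \<chi> x * \<chi> y) \<and> (\<forall>x. cmod (\<chi> x) = 1)"

definition left_ideal :: "'a::ring_1 set \<Rightarrow> bool" where
  "left_ideal I \<longleftrightarrow> 0 \<in> I \<and> (\<forall>x\<in>I. \<forall>y\<in>I. x - y \<in> I) \<and> (\<forall>r x. x \<in> I \<longrightarrow> r * x \<in> I)"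

text \<open>A generating character: an additive character whose kernel contains no
  nonzero left ideal (for finite rings equivalent to: no nonzero right ideal).\<close>
definition generating_character :: "('a::ring_1 \<Rightarrow> complex) \<Rightarrow> bool" where
  "generating_character \<chi> \<longleftrightarrow> additive_character \<chi> \<and>
     (\<forall>I. left_ideal I \<and> I \<subseteq> {x. \<chi> x = 1} \<longrightarrow> I = {0})"

definition frobenius_ring :: "'a::{ring_1,finite} itself \<Rightarrow> bool" where
  "frobenius_ring _ \<longleftrightarrow> (\<exists>\<chi>::'a \<Rightarrow> complex. generating_character \<chi>)"

definition lprinc :: "'a::ring_1 \<Rightarrow> 'a set" where
  "lprinc x = range (\<lambda>r. r * x)"

definition homogeneous_weight :: "('a::{ring_1,finite} \<Rightarrow> real) \<Rightarrow> real \<Rightarrow> bool" where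
  "homogeneous_weight \<omega> \<gamma> \<longleftrightarrow> \<omega> 0 = 0 \<and>
     (\<forall>x y. lprinc x = lprinc y \<longrightarrow> \<omega> x = \<omega> y) \<and>
     (\<forall>x. x \<noteq> 0 \<longrightarrow> (\<Sum>y\<in>lprinc x. \<omega> y) = \<gamma> * real (card (lprinc x)))"

definition normalized_homogeneous_weight :: "('a::{ring_1,finite} \<Rightarrow> real) \<Rightarrow> bool" where
  "normalized_homogeneous_weight \<omega> \<longleftrightarrow> homogeneous_weight \<omega> 1"

definition induced_partition :: "('a \<Rightarrow> 'b) \<Rightarrow> 'a set set" where
  "induced_partition f = {{x. f x = f a} | a. True}"

definition right_dual_partition ::
  "('a::{ring_1,finite} \<Rightarrow> complex) \<Rightarrow> 'a set set \<Rightarrow> 'a set set" where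
  "right_dual_partition \<chi> \<P> =
     {{a'. \<forall>P\<in>\<P>. (\<Sum>b\<in>P. \<chi> (a' * b)) = (\<Sum>b\<in>P. \<chi> (a * b))} | a. True}"

end

theory Submission
  imports Defs
begin

definition cls :: "'a::ring_1 \<Rightarrow> 'a set" where
  "cls x = {y. lprinc y = lprinc x}"

lemma char_zero_val:
  assumes "additive_character \<chi>" shows "\<chi> 0 = 1"
proof -
  have n: "cmod (\<chi> 0) = 1" and m: "\<chi> (0+0) = \<chi> 0 * \<chi> 0"
    using assms unfolding additive_character_def by blast+
  have "\<chi> 0 \<noteq> 0" using n by auto
  with m show ?thesis by simp
qed

lemma cnj_char:
  assumes "additive_character \<chi>" shows "cnj (\<chi> x) * \<chi> x = 1"
proof -
  have "cmod (\<chi> x) = 1" using assms unfolding additive_character_def by blast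
  then show ?thesis using complex_norm_square[of "\<chi> x"] by (simp add: mult.commute)
qed

lemma cnj_char_neg:
  assumes "additive_character \<chi>" shows "cnj (\<chi> x) = \<chi> (- x)"
proof -
  have a: "\<chi> (x + - x) = \<chi> x * \<chi> (-x)"
    using assms unfolding additive_character_def by blast
  have "\<chi> x * \<chi> (-x) = 1" using a char_zero_val[OF assms] by simp
  then have "cnj (\<chi> x) * (\<chi> x * \<chi> (-x)) = cnj (\<chi> x)" by simp
  then show ?thesis using cnj_char[OF assms, of x] by (simp add: mult.assoc[symmetric])
qed

lemma char_sum_ideal:
  fixes \<chi> :: "'a::{ring_1,finite} \<Rightarrow> complex"
  assumes "additive_character \<chi>" "left_ideal I" "z \<in> I" "\<chi> z \<noteq> 1"
  shows "(\<Sum>y\<in>I. \<chi> y) = 0"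
proof -
  have cl: "\<And>u v. u \<in> I \<Longrightarrow> v \<in> I \<Longrightarrow> u - v \<in> I" and z0: "0 \<in> I"
    using assms(2) unfolding left_ideal_def by blast+
  have cp: "\<And>u v. u \<in> I \<Longrightarrow> v \<in> I \<Longrightarrow> u + v \<in> I"
  proof -
    fix u v assume "u \<in> I" "v \<in> I"
    then have "0 - v \<in> I" using cl z0 by blast
    then have "u - (0 - v) \<in> I" using cl \<open>u \<in> I\<close> by blast
    then show "u + v \<in> I" by simp
  qed
  have img: "(\<lambda>y. z + y) ` I = I"
  proof
    show "(\<lambda>y. z + y) ` I \<subseteq> I" using cp assms(3) by blast
    show "I \<subseteq> (\<lambda>y. z + y) ` I"
    proof
      fix y assume "y \<in> I"
      then have "y - z \<in> I" using cl assms(3) by blast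
      then show "y \<in> (\<lambda>y. z + y) ` I" by (rule rev_image_eqI) simp
    qed
  qed
  have "(\<Sum>y\<in>I. \<chi> y) = (\<Sum>y\<in>(\<lambda>y. z + y) ` I. \<chi> y)" using img by simp
  also have "\<dots> = (\<Sum>y\<in>I. \<chi> (z + y))"
    by (subst sum.reindex) (auto simp: inj_on_def)
  also have "\<dots> = \<chi> z * (\<Sum>y\<in>I. \<chi> y)"
    using assms(1) unfolding additive_character_def by (simp add: sum_distrib_left)
  finally have "(1 - \<chi> z) * (\<Sum>y\<in>I. \<chi> y) = 0" by (simp add: algebra_simps)
  then show ?thesis using assms(4) by simp
qed

lemma left_ideal_lprinc: "left_ideal (lprinc x)"
  unfolding left_ideal_def
proof (intro conjI ballI allI impI)
  show "0 \<in> lprinc x" unfolding lprinc_def by (rule range_eqI[where x=0]) simp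
next
  fix u v assume "u \<in> lprinc x" "v \<in> lprinc x"
  then obtain a b where "u = a * x" "v = b * x" unfolding lprinc_def by blast
  then have "u - v = (a - b) * x" by (simp add: left_diff_distrib)
  then show "u - v \<in> lprinc x" unfolding lprinc_def by blast
next
  fix r u assume "u \<in> lprinc x"
  then obtain a where "u = a * x" unfolding lprinc_def by blast
  then have "r * u = (r * a) * x" by (simp add: mult.assoc)
  then show "r * u \<in> lprinc x" unfolding lprinc_def by blast
qed

lemma mem_lprinc: "x \<in> lprinc x"
  unfolding lprinc_def by (metis mult_1 rangeI)

lemma char_sum_lprinc:
  fixes \<chi> :: "'a::{ring_1,finite} \<Rightarrow> complex"
  assumes "generating_character \<chi>" "x \<noteq> 0"
  shows "(\<Sum>y\<in>lprinc x. \<chi> y) = 0"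
proof -
  have ac: "additive_character \<chi>" using assms(1) generating_character_def by blast
  have "\<not> lprinc x \<subseteq> {y. \<chi> y = 1}"
    using assms left_ideal_lprinc[of x] mem_lprinc[of x] unfolding generating_character_def by blast
  then obtain z where "z \<in> lprinc x" "\<chi> z \<noteq> 1" by blast
  then show ?thesis using char_sum_ideal[OF ac left_ideal_lprinc] by blast
qed

lemma char_sum_univ:
  fixes \<psi> :: "'a::{ring_1,finite} \<Rightarrow> complex"
  assumes "additive_character \<psi>"
  shows "(\<Sum>y\<in>UNIV. \<psi> y) = (if \<forall>y. \<psi> y = 1 then of_nat (card (UNIV::'a set)) else 0)"
proof (cases "\<forall>y. \<psi> y = 1")
  case True then show ?thesis by simp
next
  case False
  then obtain z where "\<psi> z \<noteq> 1" by blast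
  moreover have "left_ideal (UNIV::'a set)" unfolding left_ideal_def by simp
  ultimately have "(\<Sum>y\<in>UNIV. \<psi> y) = 0" using char_sum_ideal[OF assms] by blast
  then show ?thesis using False by simp
qed

lemma lprinc_sub: "y \<in> lprinc x \<Longrightarrow> lprinc y \<subseteq> lprinc x"
  unfolding lprinc_def by (auto simp: mult.assoc[symmetric])

lemma cls_sub: "y \<in> lprinc x \<Longrightarrow> cls y \<subseteq> lprinc x"
  unfolding cls_def using lprinc_sub mem_lprinc by blast

lemma mem_cls: "x \<in> cls x" unfolding cls_def by simp

lemma cls_eq: "z \<in> cls y \<Longrightarrow> cls z = cls y" unfolding cls_def by auto

lemma avg_lemma:
  fixes g :: "'a::{ring_1,finite} \<Rightarrow> real"
  shows "(\<Sum>y\<in>lprinc x. (\<Sum>z\<in>cls y. g z) / real (card (cls y))) = (\<Sum>y\<in>lprinc x. g y)"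
proof -
  let ?L = "lprinc x"
  have "(\<Sum>y\<in>?L. (\<Sum>z\<in>cls y. g z) / real (card (cls y)))
      = (\<Sum>y\<in>?L. \<Sum>z\<in>?L. if z \<in> cls y then g z / real (card (cls y)) else 0)"
  proof (rule sum.cong[OF refl])
    fix y assume "y \<in> ?L"
    then have "?L \<inter> cls y = cls y" using cls_sub by blast
    then have "(\<Sum>z\<in>cls y. g z) = (\<Sum>z\<in>?L. if z \<in> cls y then g z else 0)"
      using sum.inter_restrict[of ?L g "cls y"] by simp
    then show "(\<Sum>z\<in>cls y. g z) / real (card (cls y)) = (\<Sum>z\<in>?L. if z \<in> cls y then g z / real (card (cls y)) else 0)"
      by (simp add: sum_divide_distrib) (rule sum.cong, auto)
  qed
  also have "\<dots> = (\<Sum>z\<in>?L. \<Sum>y\<in>?L. if z \<in> cls y then g z / real (card (cls y)) else 0)"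
    by (rule sum.swap)
  also have "\<dots> = (\<Sum>z\<in>?L. g z)"
  proof (rule sum.cong[OF refl])
    fix z assume zL: "z \<in> ?L"
    have "(\<Sum>y\<in>?L. if z \<in> cls y then g z / real (card (cls y)) else 0)
        = (\<Sum>y\<in>?L. if y \<in> cls z then g z / real (card (cls z)) else 0)"
      by (rule sum.cong[OF refl]) (auto simp: cls_def)
    also have "\<dots> = (\<Sum>y\<in>?L \<inter> cls z. g z / real (card (cls z)))"
      by (rule sum.inter_restrict[symmetric]) simp
    also have "?L \<inter> cls z = cls z" using cls_sub zL by blast
    also have "(\<Sum>y\<in>cls z. g z / real (card (cls z))) = g z"
    proof -
      have "card (cls z) \<noteq> 0" using mem_cls[of z] by (auto simp: card_eq_0_iff)
      then show ?thesis by simp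
    qed
    finally show "(\<Sum>y\<in>?L. if z \<in> cls y then g z / real (card (cls y)) else 0) = g z" .
  qed
  finally show ?thesis .
qed

lemma lprinc_zero: "lprinc 0 = {0}" unfolding lprinc_def by simp

lemma cls_zero: "cls (0::'a::ring_1) = {0}"
proof -
  have "y = 0" if "lprinc y = {0}" for y :: 'a
    using mem_lprinc[of y] that by simp
  moreover have "lprinc (0::'a) = {0}" by (rule lprinc_zero)
  ultimately show ?thesis unfolding cls_def by blast
qed

lemma weight_formula:
  fixes \<omega> :: "'a::{ring_1,finite} \<Rightarrow> real"
  assumes gen: "generating_character \<chi>" and hw: "normalized_homogeneous_weight \<omega>"
  shows "\<omega> x = 1 - (\<Sum>y\<in>cls x. Re (\<chi> y)) / real (card (cls x))"
proof -
  have ac: "additive_character \<chi>" using gen generating_character_def by blast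
  have w0: "\<omega> 0 = 0" and wc: "\<And>x y. lprinc x = lprinc y \<Longrightarrow> \<omega> x = \<omega> y"
    and ws: "\<And>x. x \<noteq> 0 \<Longrightarrow> (\<Sum>y\<in>lprinc x. \<omega> y) = real (card (lprinc x))"
  proof -
    have H: "\<omega> 0 = 0 \<and> (\<forall>x y. lprinc x = lprinc y \<longrightarrow> \<omega> x = \<omega> y) \<and>
     (\<forall>x. x \<noteq> 0 \<longrightarrow> (\<Sum>y\<in>lprinc x. \<omega> y) = 1 * real (card (lprinc x)))"
      using hw unfolding normalized_homogeneous_weight_def homogeneous_weight_def by blast
    show "\<omega> 0 = 0" using H by blast
    show "\<And>x y. lprinc x = lprinc y \<Longrightarrow> \<omega> x = \<omega> y" using H by blast
    show "\<And>x. x \<noteq> 0 \<Longrightarrow> (\<Sum>y\<in>lprinc x. \<omega> y) = real (card (lprinc x))" using H[THEN conjunct2, THEN conjunct2] by simp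
  qed
  define f where "f x = 1 - (\<Sum>y\<in>cls x. Re (\<chi> y)) / real (card (cls x))" for x
  define d where "d x = \<omega> x - f x" for x
  have dc: "d y = d x" if "y \<in> cls x" for x y
  proof -
    have "lprinc y = lprinc x" using that cls_def by auto
    moreover have "cls y = cls x" using cls_eq[OF that] .
    ultimately show ?thesis unfolding d_def f_def using wc[of y x] by simp
  qed
  have f0: "f 0 = 0" unfolding f_def cls_zero using char_zero_val[OF ac] by simp
  have dsum: "(\<Sum>y\<in>lprinc x. d y) = 0" if "x \<noteq> 0" for x
  proof -
    have "(\<Sum>y\<in>lprinc x. f y) = real (card (lprinc x)) - (\<Sum>y\<in>lprinc x. Re (\<chi> y))"
      unfolding f_def by (simp add: sum_subtractf avg_lemma)
    also have "(\<Sum>y\<in>lprinc x. Re (\<chi> y)) = Re (\<Sum>y\<in>lprinc x. \<chi> y)" by simp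
    also have "\<dots> = 0" using char_sum_lprinc[OF gen that] by simp
    finally show ?thesis unfolding d_def using ws[OF that] by (simp add: sum_subtractf)
  qed
  have "d x = 0"
  proof (induction "card (lprinc x)" arbitrary: x rule: less_induct)
    case less
    show ?case
    proof (cases "x = 0")
      case True then show ?thesis unfolding d_def using w0 f0 by simp
    next
      case False
      let ?L = "lprinc x"
      have sub: "cls x \<subseteq> ?L" using cls_sub mem_lprinc by blast
      have "(\<Sum>y\<in>?L - cls x. d y) = 0"
      proof (rule sum.neutral, rule ballI)
        fix y assume y: "y \<in> ?L - cls x"
        then have "lprinc y \<noteq> ?L" "y \<in> ?L" unfolding cls_def by auto
        then have "lprinc y \<subset> ?L" using lprinc_sub by blast
        then have "card (lprinc y) < card ?L" by (simp add: psubset_card_mono)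
        then show "d y = 0" using less.hyps by blast
      qed
      moreover have "(\<Sum>y\<in>cls x. d y) = real (card (cls x)) * d x"
      proof -
        have "(\<Sum>y\<in>cls x. d y) = (\<Sum>y\<in>cls x. d x)" by (rule sum.cong) (auto dest: dc)
        then show ?thesis by simp
      qed
      moreover have "(\<Sum>y\<in>?L. d y) = (\<Sum>y\<in>cls x. d y) + (\<Sum>y\<in>?L - cls x. d y)"
        using sum.subset_diff[OF sub, of d] by (simp add: add.commute)
      ultimately have "real (card (cls x)) * d x = 0" using dsum[OF False] by simp
      moreover have "card (cls x) \<noteq> 0" using mem_cls[of x] by (auto simp: card_eq_0_iff)
      ultimately show ?thesis by simp
    qed
  qed
  then show ?thesis unfolding d_def f_def by simp
qed

lemma lprinc_rmul: "lprinc (y * r) = (\<lambda>t. t * r) ` lprinc y"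
  unfolding lprinc_def by (auto simp: mult.assoc image_image)

lemma cls_rmul:
  assumes inj: "inj (\<lambda>t::'a::ring_1. t * r)"
  shows "cls (x * r) = (\<lambda>t. t * r) ` cls x"
proof
  show "(\<lambda>t. t * r) ` cls x \<subseteq> cls (x * r)"
  proof
    fix w assume "w \<in> (\<lambda>t. t * r) ` cls x"
    then obtain y where "y \<in> cls x" "w = y * r" by blast
    then show "w \<in> cls (x * r)" unfolding cls_def by (simp add: lprinc_rmul)
  qed
  show "cls (x * r) \<subseteq> (\<lambda>t. t * r) ` cls x"
  proof
    fix w assume w: "w \<in> cls (x * r)"
    then have e: "lprinc w = (\<lambda>t. t * r) ` lprinc x" unfolding cls_def by (simp add: lprinc_rmul)
    then obtain y where y: "w = y * r" using mem_lprinc[of w] by blast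
    then have "(\<lambda>t. t * r) ` lprinc y = (\<lambda>t. t * r) ` lprinc x" using e by (simp add: lprinc_rmul)
    then have "lprinc y = lprinc x" using inj by (simp add: inj_image_eq_iff)
    then show "w \<in> (\<lambda>t. t * r) ` cls x" using y unfolding cls_def by blast
  qed
qed

lemma weight_rmul:
  fixes \<omega> :: "'a::{ring_1,finite} \<Rightarrow> real"
  assumes g1: "generating_character \<chi>" and g2: "generating_character (\<lambda>y. \<chi> (y * r))"
    and inj: "inj (\<lambda>t::'a. t * r)" and hw: "normalized_homogeneous_weight \<omega>"
  shows "\<omega> (x * r) = \<omega> x"
proof -
  have "\<omega> (x * r) = 1 - (\<Sum>y\<in>cls (x*r). Re (\<chi> y)) / real (card (cls (x*r)))"
    by (rule weight_formula[OF g1 hw])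
  also have "(\<Sum>y\<in>cls (x*r). Re (\<chi> y)) = (\<Sum>y\<in>cls x. Re (\<chi> (y * r)))"
    unfolding cls_rmul[OF inj] by (subst sum.reindex) (use inj in \<open>auto simp: inj_on_def inj_def\<close>)
  also have "card (cls (x*r)) = card (cls x)"
    unfolding cls_rmul[OF inj] by (rule card_image) (use inj in \<open>auto simp: inj_on_def inj_def\<close>)
  also have "1 - (\<Sum>y\<in>cls x. Re (\<chi> (y * r))) / real (card (cls x)) = \<omega> x"
    using weight_formula[OF g2 hw, of x] by simp
  finally show ?thesis .
qed

lemma inj_of_gen:
  fixes \<chi> :: "'a::{ring_1,finite} \<Rightarrow> complex"
  assumes g1: "generating_character \<chi>" and g2: "generating_character (\<lambda>y. \<chi> (y * r))"
  shows "inj (\<lambda>t::'a. t * r)"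
proof -
  let ?I = "{x::'a. x * r = 0}"
  have li: "left_ideal ?I" unfolding left_ideal_def
    by (auto simp: left_diff_distrib mult.assoc)
  have "?I \<subseteq> {y. \<chi> (y * r) = 1}"
  proof -
    have "\<chi> 0 = 1" using char_zero_val g1 unfolding generating_character_def by blast
    then show ?thesis by auto
  qed
  then have I0: "?I = {0}" using g2 li unfolding generating_character_def by blast
  show ?thesis
  proof (rule injI)
    fix a b assume "a * r = b * r"
    then have "a - b \<in> ?I" by (simp add: left_diff_distrib)
    then show "a = b" using I0 by simp
  qed
qed

lemma char_repr:
  fixes \<chi>1 \<chi>2 :: "'a::{ring_1,finite} \<Rightarrow> complex"
  assumes g1: "generating_character \<chi>1" and a2: "additive_character \<chi>2"
  shows "\<exists>r. \<forall>x. \<chi>2 x = \<chi>1 (x * r)"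
proof -
  have ac1: "additive_character \<chi>1" using g1 generating_character_def by blast
  have m1: "\<And>u v. \<chi>1 (u + v) = \<chi>1 u * \<chi>1 v" and n1: "\<And>u. cmod (\<chi>1 u) = 1"
    using ac1 unfolding additive_character_def by blast+
  have m2: "\<And>u v. \<chi>2 (u + v) = \<chi>2 u * \<chi>2 v" and n2: "\<And>u. cmod (\<chi>2 u) = 1"
    using a2 unfolding additive_character_def by blast+
  have c10: "\<chi>1 0 = 1" by (rule char_zero_val[OF ac1])
  let ?N = "of_nat (card (UNIV::'a set)) :: complex"
  have Npos: "?N \<noteq> 0" by simp
  have rz: "r = 0" if "\<forall>x. \<chi>1 (x * r) = 1" for r
  proof -
    have "lprinc r \<subseteq> {y. \<chi>1 y = 1}" using that unfolding lprinc_def by auto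
    then have "lprinc r = {0}" using g1 left_ideal_lprinc unfolding generating_character_def by blast
    then show ?thesis using mem_lprinc[of r] by simp
  qed
  have add_r: "additive_character (\<lambda>r. \<chi>1 (x * r))" for x
    unfolding additive_character_def by (simp add: distrib_left m1 n1)
  have add_x: "additive_character (\<lambda>x. \<chi>1 (x * r))" for r
    unfolding additive_character_def by (simp add: distrib_right m1 n1)
  define J where "J = {z. \<forall>r. \<chi>1 (z * r) = 1}"
  have S1: "(\<Sum>x\<in>UNIV. \<Sum>r\<in>UNIV. \<chi>1 (x * r)) = of_nat (card J) * ?N"
  proof -
    have "(\<Sum>x\<in>UNIV. \<Sum>r\<in>UNIV. \<chi>1 (x * r)) = (\<Sum>x\<in>UNIV. if x \<in> J then ?N else 0)"
      by (rule sum.cong[OF refl]) (simp add: char_sum_univ[OF add_r] J_def)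
    also have "\<dots> = (\<Sum>x\<in>J. ?N)" by (simp add: sum.If_cases)
    finally show ?thesis by simp
  qed
  have S2: "(\<Sum>r\<in>UNIV. \<Sum>x\<in>UNIV. \<chi>1 (x * r)) = ?N"
  proof -
    have "(\<Sum>r\<in>UNIV. \<Sum>x\<in>UNIV. \<chi>1 (x * r)) = (\<Sum>r\<in>(UNIV::'a set). if r = 0 then ?N else 0)"
    proof (rule sum.cong[OF refl])
      fix r :: 'a
      show "(\<Sum>x\<in>UNIV. \<chi>1 (x * r)) = (if r = 0 then ?N else 0)"
        using char_sum_univ[OF add_x, of r] rz[of r] c10 by auto
    qed
    also have "\<dots> = ?N" by simp
    finally show ?thesis .
  qed
  have "of_nat (card J) * ?N = ?N" using S1 S2 sum.swap[of "\<lambda>x r. \<chi>1 (x * r)" UNIV UNIV] by simp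
  then have cJ: "card J = 1" using Npos by simp
  have "0 \<in> J" unfolding J_def using c10 by simp
  then have J0: "J = {0}" using cJ by (metis card_1_singletonE singletonD)
  have sumr: "(\<Sum>r\<in>UNIV. \<chi>1 (x * r)) = (if x = 0 then ?N else 0)" for x
    using char_sum_univ[OF add_r, of x] J0 c10 unfolding J_def by auto
  have "(\<Sum>r\<in>UNIV. \<Sum>x\<in>UNIV. \<chi>2 x * cnj (\<chi>1 (x * r))) = (\<Sum>x\<in>UNIV. \<chi>2 x * cnj (\<Sum>r\<in>UNIV. \<chi>1 (x * r)))"
    by (subst sum.swap) (simp add: sum_distrib_left)
  also have "\<dots> = (\<Sum>x\<in>(UNIV::'a set). if x = 0 then ?N else 0)"
    by (rule sum.cong[OF refl]) (simp add: sumr char_zero_val[OF a2])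
  also have "\<dots> = ?N" by simp
  finally have "(\<Sum>r\<in>UNIV. \<Sum>x\<in>UNIV. \<chi>2 x * cnj (\<chi>1 (x * r))) \<noteq> 0" using Npos by simp
  then obtain r where r: "(\<Sum>x\<in>UNIV. \<chi>2 x * cnj (\<chi>1 (x * r))) \<noteq> 0"
    by (meson sum.neutral UNIV_I)
  have apsi: "additive_character (\<lambda>x. \<chi>2 x * cnj (\<chi>1 (x * r)))"
    unfolding additive_character_def by (simp add: distrib_right m1 m2 n1 n2 norm_mult)
  have triv: "\<forall>x. \<chi>2 x * cnj (\<chi>1 (x * r)) = 1"
    using char_sum_univ[OF apsi] r by (auto split: if_splits)
  show ?thesis
  proof (intro exI allI)
    fix x
    have "\<chi>2 x = \<chi>2 x * (cnj (\<chi>1 (x * r)) * \<chi>1 (x * r))" using cnj_char[OF ac1] by simp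
    also have "\<dots> = (\<chi>2 x * cnj (\<chi>1 (x * r))) * \<chi>1 (x * r)" by (simp add: mult.assoc)
    also have "\<dots> = \<chi>1 (x * r)" using triv by simp
    finally show "\<chi>2 x = \<chi>1 (x * r)" .
  qed
qed


lemma lprinc_neg: "lprinc (- x) = lprinc x"
proof -
  have "lprinc (- x) \<subseteq> lprinc x" for x :: 'a
  proof
    fix w assume "w \<in> lprinc (- x)"
    then obtain s where "w = s * (- x)" unfolding lprinc_def by blast
    then have "w = (- s) * x" by simp
    then show "w \<in> lprinc x" unfolding lprinc_def by blast
  qed
  from this[of x] this[of "-x"] show ?thesis by simp
qed

lemma sum_indep:
  fixes \<omega> :: "'a::{ring_1,finite} \<Rightarrow> real"
  assumes hw: "normalized_homogeneous_weight \<omega>"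
    and g1: "generating_character \<chi>1" and g2: "generating_character \<chi>2"
    and P: "P = {x. \<omega> x = \<omega> c}"
  shows "(\<Sum>b\<in>P. \<chi>1 (a * b)) = (\<Sum>b\<in>P. \<chi>2 (a * b)) \<and> (\<Sum>b\<in>P. \<chi>1 (a * b)) \<in> \<real>"
proof
  have ac1: "additive_character \<chi>1" using g1 generating_character_def by blast
  have a2: "additive_character \<chi>2" using g2 generating_character_def by blast
  obtain r where r: "\<forall>x. \<chi>2 x = \<chi>1 (x * r)" using char_repr[OF g1 a2] by blast
  then have e: "\<chi>2 = (\<lambda>y. \<chi>1 (y * r))" by auto
  then have g2': "generating_character (\<lambda>y. \<chi>1 (y * r))" using g2 by simp
  have inj: "inj (\<lambda>t::'a. t * r)" by (rule inj_of_gen[OF g1 g2'])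
  have wr: "\<And>x. \<omega> (x * r) = \<omega> x" by (rule weight_rmul[OF g1 g2' inj hw])
  have surj: "surj (\<lambda>t::'a. t * r)" using finite_UNIV_inj_surj[OF _ inj] by simp
  have img: "(\<lambda>t. t * r) ` P = P"
  proof
    show "(\<lambda>t. t * r) ` P \<subseteq> P" using wr P by auto
    show "P \<subseteq> (\<lambda>t. t * r) ` P"
    proof
      fix b assume b: "b \<in> P"
      obtain b' where b': "b = b' * r" using surj by (metis surjD)
      then have "b' \<in> P" using b wr P by auto
      then show "b \<in> (\<lambda>t. t * r) ` P" using b' by blast
    qed
  qed
  have "(\<Sum>b\<in>P. \<chi>2 (a * b)) = (\<Sum>b\<in>P. \<chi>1 (a * (b * r)))" using r by (simp add: mult.assoc)
  also have "\<dots> = (\<Sum>b\<in>(\<lambda>t. t * r) ` P. \<chi>1 (a * b))"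
    by (subst sum.reindex) (use inj in \<open>auto simp: inj_on_def inj_def\<close>)
  also have "\<dots> = (\<Sum>b\<in>P. \<chi>1 (a * b))" using img by simp
  finally show "(\<Sum>b\<in>P. \<chi>1 (a * b)) = (\<Sum>b\<in>P. \<chi>2 (a * b))" by simp
  have wc: "\<And>x y. lprinc x = lprinc y \<Longrightarrow> \<omega> x = \<omega> y"
    using hw unfolding normalized_homogeneous_weight_def homogeneous_weight_def by blast
  have wn: "\<omega> (- x) = \<omega> x" for x using wc[OF lprinc_neg] .
  have imgn: "uminus ` P = P"
  proof
    show "uminus ` P \<subseteq> P" using wn P by auto
    show "P \<subseteq> uminus ` P"
    proof
      fix b assume "b \<in> P"
      then have "- b \<in> P" using wn P by auto
      then show "b \<in> uminus ` P" by (rule rev_image_eqI) simp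
    qed
  qed
  have "cnj (\<Sum>b\<in>P. \<chi>1 (a * b)) = (\<Sum>b\<in>P. \<chi>1 (a * (- b)))"
    by (simp add: cnj_char_neg[OF ac1])
  also have "\<dots> = (\<Sum>b\<in>uminus ` P. \<chi>1 (a * b))"
    by (subst sum.reindex) (auto simp: inj_on_def)
  also have "\<dots> = (\<Sum>b\<in>P. \<chi>1 (a * b))" using imgn by simp
  finally show "(\<Sum>b\<in>P. \<chi>1 (a * b)) \<in> \<real>" by (simp add: Reals_cnj_iff)
qed

theorem mainTheorem2:
  fixes \<omega> :: "'a::{ring_1,finite} \<Rightarrow> real"
  assumes "frobenius_ring TYPE('a)"
    and "normalized_homogeneous_weight \<omega>"
  shows "(\<forall>P\<in>induced_partition \<omega>. \<forall>a::'a. \<forall>\<chi>1 \<chi>2.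
            generating_character \<chi>1 \<and> generating_character \<chi>2 \<longrightarrow>
              (\<Sum>b\<in>P. \<chi>1 (a * b)) = (\<Sum>b\<in>P. \<chi>2 (a * b))
              \<and> (\<Sum>b\<in>P. \<chi>1 (a * b)) \<in> \<real>)
       \<and> (\<forall>\<chi>1 \<chi>2. generating_character \<chi>1 \<and> generating_character \<chi>2 \<longrightarrow>
            right_dual_partition \<chi>1 (induced_partition \<omega>)
            = right_dual_partition \<chi>2 (induced_partition \<omega>))"
proof -
  have key: "\<forall>P\<in>induced_partition \<omega>. \<forall>a::'a. \<forall>\<chi>1 \<chi>2.
            generating_character \<chi>1 \<and> generating_character \<chi>2 \<longrightarrow>
              (\<Sum>b\<in>P. \<chi>1 (a * b)) = (\<Sum>b\<in>P. \<chi>2 (a * b))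
              \<and> (\<Sum>b\<in>P. \<chi>1 (a * b)) \<in> \<real>"
  proof (intro ballI allI impI)
    fix P a and \<chi>1 \<chi>2 :: "'a \<Rightarrow> complex"
    assume "P \<in> induced_partition \<omega>" "generating_character \<chi>1 \<and> generating_character \<chi>2"
    then obtain c where "P = {x. \<omega> x = \<omega> c}" "generating_character \<chi>1" "generating_character \<chi>2"
      unfolding induced_partition_def by blast
    then show "(\<Sum>b\<in>P. \<chi>1 (a * b)) = (\<Sum>b\<in>P. \<chi>2 (a * b)) \<and> (\<Sum>b\<in>P. \<chi>1 (a * b)) \<in> \<real>"
      using sum_indep[OF assms(2)] by blast
  qed
  moreover have "\<forall>\<chi>1 \<chi>2. generating_character \<chi>1 \<and> generating_character \<chi>2 \<longrightarrow>
            right_dual_partition \<chi>1 (induced_partition \<omega>)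
            = right_dual_partition \<chi>2 (induced_partition \<omega>)"
  proof (intro allI impI)
    fix \<chi>1 \<chi>2 :: "'a \<Rightarrow> complex"
    assume g: "generating_character \<chi>1 \<and> generating_character \<chi>2"
    have eq: "\<And>P a. P \<in> induced_partition \<omega> \<Longrightarrow> (\<Sum>b\<in>P. \<chi>1 (a * b)) = (\<Sum>b\<in>P. \<chi>2 (a * b))"
      using key g by blast
    show "right_dual_partition \<chi>1 (induced_partition \<omega>) = right_dual_partition \<chi>2 (induced_partition \<omega>)"
      unfolding right_dual_partition_def using eq by simp
  qed
  ultimately show ?thesis by blast
qed

end
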